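(* Let $f\colon M^n\to\mathbb{R}^m$ be an isometric immersion and $F\colon(-\varepsilon,\varepsilon)\times M^n\to\mathbb{R}^m$ a conformal infinitesimal variation of $f$ with conformal infinitesimal bending $\mathcal{T}=F_*\partial_t|_{t=0}$ and conformal factor $\rho$. Let $\alpha^t$ be the second fundamental form of $f_t=F(t,\cdot)$. Then $\langle\frac{\partial}{\partial t}|_{t=0}\alpha^t(X,Y),\eta\rangle=\langle\beta(X,Y)+\rho\alpha(X,Y),\eta\rangle$ for all $X,Y\in\mathfrak{X}(M)$ and all normal sections $\eta$ of $f$.
   Context: A conformal infinitesimal variation of $f$ is a smooth $F$ with $f_t=F(t,\cdot)$ immersions, $f_0=f$, and a positive $\gamma\in C^\infty((-\varepsilon,\varepsilon)\times M)$, $\gamma(0,\cdot)=1$, such that $\frac{\partial}{\partial t}|_{t=0}(\gamma\langle f_{t*}X,f_{t*}Y\rangle)=0$ for all $X,Y$. Then $\mathcal{T}$ satisfies $\langle\tilde\nabla_X\mathcal{T},f_*Y\rangle+\langle f_*X,\tilde\nabla_Y\mathcal{T}\rangle=2\rho\langle X,Y\rangle$ with conformal factor $\rho=-\frac12\partial_t\gamma(0,\cdot)$. Here $\tilde\nabla$ is the Euclidean connection, $\nabla$ the Levi-Civita connection of $M$, $\alpha$ the second fundamental form of $f$, and $\beta(X,Y)=(\tilde\nabla_X\tilde\nabla_Y\mathcal{T}-\tilde\nabla_{\nabla_XY}\mathcal{T})_{N_fM}-\rho\alpha(X,Y)$. *)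

theory Defs
  imports "HOL-Analysis.Analysis"
begin

text \<open>Local (chart) setting: the manifold M^n is represented by an open set
U of real^'n (a coordinate chart); vector fields are smooth maps U -> real^'n.\<close>

primrec Ck :: "nat \<Rightarrow> 'a::real_normed_vector set \<Rightarrow> ('a \<Rightarrow> 'b::real_normed_vector) \<Rightarrow> bool" where
  "Ck 0 S f = continuous_on S f"
| "Ck (Suc k) S f = (\<exists>f'. (\<forall>x\<in>S. (f has_derivative f' x) (at x)) \<and> (\<forall>v. Ck k S (\<lambda>x. f' x v)))"

definition smooth_on :: "'a::real_normed_vector set \<Rightarrow> ('a \<Rightarrow> 'b::real_normed_vector) \<Rightarrow> bool" where
  "smooth_on S f \<longleftrightarrow> (\<forall>k. Ck k S f)"

definition dF :: "(real \<times> (real^'n) \<Rightarrow> real^'m) \<Rightarrow> real \<Rightarrow> real^'n \<Rightarrow> real^'n \<Rightarrow> real^'m" where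
  "dF F t x v = frechet_derivative (\<lambda>y. F (t, y)) (at x) v"

definition nproj :: "(real \<times> (real^'n) \<Rightarrow> real^'m) \<Rightarrow> real \<Rightarrow> real^'n \<Rightarrow> real^'m \<Rightarrow> real^'m" where
  "nproj F t x w = (THE u. (\<forall>v. u \<bullet> dF F t x v = 0) \<and> w - u \<in> range (dF F t x))"

definition Dir :: "(real^'n \<Rightarrow> 'b::real_normed_vector) \<Rightarrow> (real^'n \<Rightarrow> real^'n) \<Rightarrow> real^'n \<Rightarrow> 'b" where
  "Dir V X x = frechet_derivative V (at x) (X x)"

definition sff :: "(real \<times> (real^'n) \<Rightarrow> real^'m) \<Rightarrow> real \<Rightarrow> (real^'n \<Rightarrow> real^'n) \<Rightarrow> (real^'n \<Rightarrow> real^'n) \<Rightarrow> real^'n \<Rightarrow> real^'m" where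
  "sff F t X Y x = nproj F t x (Dir (\<lambda>y. dF F t y (Y y)) X x)"

definition gmet :: "(real \<times> (real^'n) \<Rightarrow> real^'m) \<Rightarrow> real^'n \<Rightarrow> real^'n \<Rightarrow> real^'n \<Rightarrow> real" where
  "gmet F x v w = dF F 0 x v \<bullet> dF F 0 x w"

text \<open>Christoffel symbols of the induced metric (Koszul formula for coordinate fields).\<close>
definition christoffel :: "(real \<times> (real^'n) \<Rightarrow> real^'m) \<Rightarrow> real^'n \<Rightarrow> real^'n \<Rightarrow> real^'n \<Rightarrow> real^'n" where
  "christoffel F x v w = (THE u. \<forall>z. gmet F x u z =
      (1/2) * (frechet_derivative (\<lambda>y. gmet F y w z) (at x) v
             + frechet_derivative (\<lambda>y. gmet F y v z) (at x) w
             - frechet_derivative (\<lambda>y. gmet F y v w) (at x) z))"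

definition LC :: "(real \<times> (real^'n) \<Rightarrow> real^'m) \<Rightarrow> (real^'n \<Rightarrow> real^'n) \<Rightarrow> (real^'n \<Rightarrow> real^'n) \<Rightarrow> real^'n \<Rightarrow> real^'n" where
  "LC F X Y x = Dir Y X x + christoffel F x (X x) (Y x)"

definition bending :: "(real \<times> (real^'n) \<Rightarrow> real^'m) \<Rightarrow> real^'n \<Rightarrow> real^'m" where
  "bending F x = frechet_derivative F (at (0, x)) (1, 0)"

definition cfactor :: "(real \<times> (real^'n) \<Rightarrow> real) \<Rightarrow> real^'n \<Rightarrow> real" where
  "cfactor \<gamma> x = - (1/2) * frechet_derivative \<gamma> (at (0, x)) (1, 0)"

definition betaT :: "(real \<times> (real^'n) \<Rightarrow> real^'m) \<Rightarrow> (real \<times> (real^'n) \<Rightarrow> real) \<Rightarrow> (real^'n \<Rightarrow> real^'n) \<Rightarrow> (real^'n \<Rightarrow> real^'n) \<Rightarrow> real^'n \<Rightarrow> real^'m" where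
  "betaT F \<gamma> X Y x = nproj F 0 x (Dir (Dir (bending F) Y) X x - Dir (bending F) (LC F X Y) x)
      - cfactor \<gamma> x *\<^sub>R sff F 0 X Y x"

end

theory Submission
  imports Defs
begin

lemma Ck_cong:
  assumes "open S" "\<And>x. x \<in> S \<Longrightarrow> f x = g x" "Ck k S f"
  shows "Ck k S g"
  using assms
proof (induction k arbitrary: f g)
  case 0
  then show ?case using continuous_on_cong by fastforce
next
  case (Suc k)
  from Suc.prems(3) obtain f' where d: "\<forall>x\<in>S. (f has_derivative f' x) (at x)"
    and c: "\<forall>v. Ck k S (\<lambda>x. f' x v)" by auto
  have "\<forall>x\<in>S. (g has_derivative f' x) (at x)"
    using d Suc.prems(1,2) by (metis has_derivative_transform_within_open)
  then show ?case using c by auto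
qed

lemma smooth_cont: "smooth_on S f \<Longrightarrow> continuous_on S f"
  unfolding smooth_on_def by (metis Ck.simps(1))

lemma smooth_deriv:
  assumes "open S" "smooth_on S f" "p \<in> S"
  shows "(f has_derivative frechet_derivative f (at p)) (at p)"
proof -
  from assms(2) have "Ck (Suc 0) S f" unfolding smooth_on_def by blast
  then obtain f' where "\<forall>x\<in>S. (f has_derivative f' x) (at x)" by auto
  then show ?thesis using assms(3) frechet_derivative_at by metis
qed

lemma smooth_deriv_smooth:
  assumes "open S" "smooth_on S f"
  shows "smooth_on S (\<lambda>q. frechet_derivative f (at q) v)"
  unfolding smooth_on_def
proof
  fix k
  from assms(2) have "Ck (Suc k) S f" unfolding smooth_on_def by blast
  then obtain f' where d: "\<forall>x\<in>S. (f has_derivative f' x) (at x)"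
    and c: "\<forall>v. Ck k S (\<lambda>x. f' x v)" by auto
  show "Ck k S (\<lambda>q. frechet_derivative f (at q) v)"
    by (rule Ck_cong[OF assms(1) _ c[rule_format, of v]]) (metis d frechet_derivative_at)
qed

lemma smooth_linear:
  assumes "open S" "smooth_on S f" "p \<in> S"
  shows "linear (frechet_derivative f (at p))"
  using smooth_deriv[OF assms] has_derivative_linear by blast

lemma schwarz_step:
  fixes f :: "'a::real_normed_vector \<Rightarrow> real"
  assumes r: "ball p r \<subseteq> S" and h: "0 < h" "h * (norm a + norm b) < r"
    and f': "\<And>q. q \<in> S \<Longrightarrow> (f has_derivative f' q) (at q)"
    and fa: "\<And>q. q \<in> S \<Longrightarrow> ((\<lambda>q. f' q a) has_derivative fa q) (at q)"
  shows "\<exists>q1. dist q1 p \<le> h * (norm a + norm b) \<and>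
     f (p + h *\<^sub>R a + h *\<^sub>R b) - f (p + h *\<^sub>R a) - f (p + h *\<^sub>R b) + f p = h * h * fa q1 b"
proof -
  have inS: "p + s *\<^sub>R a + t *\<^sub>R b \<in> S" if "0 \<le> s" "s \<le> h" "0 \<le> t" "t \<le> h" for s t
  proof -
    have "norm (s *\<^sub>R a + t *\<^sub>R b) \<le> s * norm a + t * norm b"
      using that by (metis abs_of_nonneg norm_scaleR norm_triangle_ineq)
    also have "\<dots> \<le> h * norm a + h * norm b"
      using that by (intro add_mono mult_right_mono) auto
    finally have "norm (s *\<^sub>R a + t *\<^sub>R b) < r" using h by (simp add: distrib_left)
    then have "p + s *\<^sub>R a + t *\<^sub>R b \<in> ball p r" unfolding mem_ball dist_norm by (metis add.assoc add_diff_cancel_left' norm_minus_commute)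
    then show ?thesis using r by blast
  qed
  have lin: "linear (f' q)" if "q \<in> S" for q using f'[OF that] has_derivative_linear by blast
  have lina: "linear (fa q)" if "q \<in> S" for q using fa[OF that] has_derivative_linear by blast
  define g where "g s = f (p + s *\<^sub>R a + h *\<^sub>R b) - f (p + s *\<^sub>R a)" for s
  have gd: "(g has_derivative (\<lambda>u. u * (f' (p + s *\<^sub>R a + h *\<^sub>R b) a - f' (p + s *\<^sub>R a) a))) (at s within {0..h})"
    if "0 \<le> s" "s \<le> h" for s
  proof -
    have S1: "p + s *\<^sub>R a + h *\<^sub>R b \<in> S" using inS[of s h] that h by auto
    have S2: "p + s *\<^sub>R a \<in> S" using inS[of s 0] that h by auto
    have d1: "((\<lambda>s. f (p + s *\<^sub>R a + h *\<^sub>R b)) has_derivative (\<lambda>u. f' (p + s *\<^sub>R a + h *\<^sub>R b) (u *\<^sub>R a))) (at s within {0..h})"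
      by (rule has_derivative_compose[where f="\<lambda>s. p + s *\<^sub>R a + h *\<^sub>R b" and g=f, OF _ f'[OF S1]])
         (auto intro!: derivative_eq_intros)
    have d2: "((\<lambda>s. f (p + s *\<^sub>R a)) has_derivative (\<lambda>u. f' (p + s *\<^sub>R a) (u *\<^sub>R a))) (at s within {0..h})"
      by (rule has_derivative_compose[where f="\<lambda>s. p + s *\<^sub>R a" and g=f, OF _ f'[OF S2]])
         (auto intro!: derivative_eq_intros)
    have "(g has_derivative (\<lambda>u. f' (p + s *\<^sub>R a + h *\<^sub>R b) (u *\<^sub>R a) - f' (p + s *\<^sub>R a) (u *\<^sub>R a))) (at s within {0..h})"
      unfolding g_def by (rule has_derivative_diff[OF d1 d2])
    moreover have "(\<lambda>u. f' (p + s *\<^sub>R a + h *\<^sub>R b) (u *\<^sub>R a) - f' (p + s *\<^sub>R a) (u *\<^sub>R a))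
        = (\<lambda>u. u * (f' (p + s *\<^sub>R a + h *\<^sub>R b) a - f' (p + s *\<^sub>R a) a))"
      using linear_scale[OF lin[OF S1]] linear_scale[OF lin[OF S2]] by (auto simp: algebra_simps)
    ultimately show ?thesis by simp
  qed
  obtain \<sigma> where \<sigma>: "\<sigma> \<in> {0<..<h}" and g1: "g h - g 0 = (h - 0) * (f' (p + \<sigma> *\<^sub>R a + h *\<^sub>R b) a - f' (p + \<sigma> *\<^sub>R a) a)"
    using mvt_simple[OF h(1), of g, OF gd] by auto
  define k where "k t = f' (p + \<sigma> *\<^sub>R a + t *\<^sub>R b) a" for t
  have kd: "(k has_derivative (\<lambda>u. u * fa (p + \<sigma> *\<^sub>R a + t *\<^sub>R b) b)) (at t within {0..h})"
    if "0 \<le> t" "t \<le> h" for t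
  proof -
    have S1: "p + \<sigma> *\<^sub>R a + t *\<^sub>R b \<in> S" using inS[of \<sigma> t] that \<sigma> by auto
    have "(k has_derivative (\<lambda>u. fa (p + \<sigma> *\<^sub>R a + t *\<^sub>R b) (u *\<^sub>R b))) (at t within {0..h})"
      unfolding k_def
      by (rule has_derivative_compose[where f="\<lambda>t. p + \<sigma> *\<^sub>R a + t *\<^sub>R b" and g="\<lambda>q. f' q a",
            OF _ fa[OF S1]])
         (auto intro!: derivative_eq_intros)
    moreover have "(\<lambda>u. fa (p + \<sigma> *\<^sub>R a + t *\<^sub>R b) (u *\<^sub>R b)) = (\<lambda>u. u * fa (p + \<sigma> *\<^sub>R a + t *\<^sub>R b) b)"
      using linear_scale[OF lina[OF S1]] by auto
    ultimately show ?thesis by simp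
  qed
  obtain \<tau> where \<tau>: "\<tau> \<in> {0<..<h}" and k1: "k h - k 0 = (h - 0) * fa (p + \<sigma> *\<^sub>R a + \<tau> *\<^sub>R b) b"
    using mvt_simple[OF h(1), of k, OF kd] by auto
  have "g h - g 0 = h * h * fa (p + \<sigma> *\<^sub>R a + \<tau> *\<^sub>R b) b"
    using g1 k1 unfolding k_def by simp
  moreover have "g h - g 0 = f (p + h *\<^sub>R a + h *\<^sub>R b) - f (p + h *\<^sub>R a) - f (p + h *\<^sub>R b) + f p"
    unfolding g_def by simp
  moreover have "dist (p + \<sigma> *\<^sub>R a + \<tau> *\<^sub>R b) p \<le> h * (norm a + norm b)"
  proof -
    have "dist (p + \<sigma> *\<^sub>R a + \<tau> *\<^sub>R b) p = norm (\<sigma> *\<^sub>R a + \<tau> *\<^sub>R b)" by (simp add: dist_norm)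
    also have "\<dots> \<le> \<sigma> * norm a + \<tau> * norm b"
      using \<sigma> \<tau> by (metis abs_of_nonneg greaterThanLessThan_iff less_eq_real_def norm_scaleR norm_triangle_ineq)
    also have "\<dots> \<le> h * norm a + h * norm b"
      using \<sigma> \<tau> by (intro add_mono mult_right_mono) auto
    finally show ?thesis by (simp add: distrib_left)
  qed
  ultimately show ?thesis by metis
qed


lemma schwarz_real:
  fixes f :: "'a::real_normed_vector \<Rightarrow> real"
  assumes S: "open S" "p \<in> S"
    and f': "\<And>q. q \<in> S \<Longrightarrow> (f has_derivative f' q) (at q)"
    and fa: "\<And>q. q \<in> S \<Longrightarrow> ((\<lambda>q. f' q a) has_derivative fa q) (at q)"
    and fb: "\<And>q. q \<in> S \<Longrightarrow> ((\<lambda>q. f' q b) has_derivative fb q) (at q)"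
    and ca: "continuous (at p) (\<lambda>q. fa q b)" and cb: "continuous (at p) (\<lambda>q. fb q a)"
  shows "fa p b = fb p a"
proof (rule ccontr)
  assume ne: "fa p b \<noteq> fb p a"
  define d where "d = \<bar>fa p b - fb p a\<bar>"
  have d: "d > 0" using ne by (simp add: d_def)
  obtain r where r: "r > 0" "ball p r \<subseteq> S" using S open_contains_ball by blast
  obtain d1 where d1: "d1 > 0" "\<And>q. dist q p < d1 \<Longrightarrow> dist (fa q b) (fa p b) < d/2"
    using ca d unfolding continuous_at_eps_delta by (metis half_gt_zero)
  obtain d2 where d2: "d2 > 0" "\<And>q. dist q p < d2 \<Longrightarrow> dist (fb q a) (fb p a) < d/2"
    using cb d unfolding continuous_at_eps_delta by (metis half_gt_zero)
  define c where "c = norm a + norm b"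
  define m where "m = min r (min d1 d2)"
  have m: "m > 0" using r d1 d2 by (simp add: m_def)
  define h where "h = m / (2 * (c + 1))"
  have c0: "c \<ge> 0" by (simp add: c_def)
  have h0: "h > 0" using m c0 by (simp add: h_def)
  have hc: "h * c < m"
  proof -
    have "h * c \<le> h * (c + 1)" using h0 by simp
    also have "\<dots> = m / 2" using c0 by (simp add: h_def field_simps)
    finally show ?thesis using m by simp
  qed
  obtain q1 where q1: "dist q1 p \<le> h * c"
    "f (p + h *\<^sub>R a + h *\<^sub>R b) - f (p + h *\<^sub>R a) - f (p + h *\<^sub>R b) + f p = h * h * fa q1 b"
    using schwarz_step[OF r(2) h0, of a b f f' fa] hc f' fa unfolding c_def m_def by force
  obtain q2 where q2: "dist q2 p \<le> h * c"
    "f (p + h *\<^sub>R b + h *\<^sub>R a) - f (p + h *\<^sub>R b) - f (p + h *\<^sub>R a) + f p = h * h * fb q2 a"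
    using schwarz_step[OF r(2) h0, of b a f f' fb] hc f' fb unfolding c_def m_def by (force simp: add.commute)
  have "p + h *\<^sub>R b + h *\<^sub>R a = p + h *\<^sub>R a + h *\<^sub>R b" by (simp add: algebra_simps)
  then have "h * h * fa q1 b = h * h * fb q2 a" using q1(2) q2(2) by (metis add_diff_eq diff_add_eq diff_diff_eq)
  then have eq: "fa q1 b = fb q2 a" using h0 by simp
  have "dist q1 p < d1" "dist q2 p < d2" using q1(1) q2(1) hc unfolding m_def by auto
  then have "dist (fa q1 b) (fa p b) < d/2" "dist (fb q2 a) (fb p a) < d/2" using d1 d2 by auto
  then have "\<bar>fa p b - fb p a\<bar> < d" using eq unfolding dist_real_def by linarith
  then show False by (simp add: d_def)
qed


lemma has_derivative_inner_const:
  "(g has_derivative g') F \<Longrightarrow> ((\<lambda>q. g q \<bullet> e) has_derivative (\<lambda>v. g' v \<bullet> e)) F"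
  by (rule bounded_linear.has_derivative[OF bounded_linear_inner_left])

lemma smooth_cont_at:
  assumes "open S" "smooth_on S f" "p \<in> S"
  shows "continuous (at p) f"
  using smooth_cont[OF assms(2)] assms(1,3) continuous_on_eq_continuous_at by blast

lemma schwarz_smooth:
  fixes f :: "'a::real_normed_vector \<Rightarrow> 'b::euclidean_space"
  assumes S: "open S" "smooth_on S f" "p \<in> S"
  shows "frechet_derivative (\<lambda>q. frechet_derivative f (at q) a) (at p) b
       = frechet_derivative (\<lambda>q. frechet_derivative f (at q) b) (at p) a"
proof (rule euclidean_eqI)
  fix e :: 'b assume e: "e \<in> Basis"
  let ?f' = "\<lambda>q. frechet_derivative f (at q)"
  let ?fa = "\<lambda>q. frechet_derivative (\<lambda>q. ?f' q a) (at q)"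
  let ?fb = "\<lambda>q. frechet_derivative (\<lambda>q. ?f' q b) (at q)"
  have sa: "smooth_on S (\<lambda>q. ?f' q a)" and sb: "smooth_on S (\<lambda>q. ?f' q b)"
    using smooth_deriv_smooth[OF S(1,2)] by auto
  show "?fa p b \<bullet> e = ?fb p a \<bullet> e"
  proof (rule schwarz_real[where f="\<lambda>q. f q \<bullet> e" and f'="\<lambda>q v. ?f' q v \<bullet> e"
        and fa="\<lambda>q v. ?fa q v \<bullet> e" and fb="\<lambda>q v. ?fb q v \<bullet> e", OF S(1,3)])
    fix q assume q: "q \<in> S"
    show "((\<lambda>q. f q \<bullet> e) has_derivative (\<lambda>v. ?f' q v \<bullet> e)) (at q)"
      by (rule has_derivative_inner_const[OF smooth_deriv[OF S(1,2) q]])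
    show "((\<lambda>q. ?f' q a \<bullet> e) has_derivative (\<lambda>v. ?fa q v \<bullet> e)) (at q)"
      by (rule has_derivative_inner_const[OF smooth_deriv[OF S(1) sa q]])
    show "((\<lambda>q. ?f' q b \<bullet> e) has_derivative (\<lambda>v. ?fb q v \<bullet> e)) (at q)"
      by (rule has_derivative_inner_const[OF smooth_deriv[OF S(1) sb q]])
  next
    show "continuous (at p) (\<lambda>q. ?fa q b \<bullet> e)"
      by (intro continuous_intros smooth_cont_at[OF S(1) _ S(3)] smooth_deriv_smooth[OF S(1) sa])
    show "continuous (at p) (\<lambda>q. ?fb q a \<bullet> e)"
      by (intro continuous_intros smooth_cont_at[OF S(1) _ S(3)] smooth_deriv_smooth[OF S(1) sb])
  qed
qed

lemma lin_expand:
  fixes L :: "real^'n \<Rightarrow> 'b::real_vector"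
  assumes "linear L"
  shows "L v = (\<Sum>i\<in>UNIV. (v$i) *\<^sub>R L (axis i 1))"
proof -
  have "L v = L (\<Sum>i\<in>UNIV. (v$i) *\<^sub>R axis i 1)"
    using basis_expansion[of v] by (simp add: scalar_mult_eq_scaleR)
  also have "\<dots> = (\<Sum>i\<in>UNIV. (v$i) *\<^sub>R L (axis i 1))"
    using assms by (simp add: linear_sum linear_scale)
  finally show ?thesis .
qed

definition gram :: "(real^'n \<Rightarrow> real^'m) \<Rightarrow> real^'n^'n" where
  "gram A = (\<chi> i j. A (axis i 1) \<bullet> A (axis j 1))"
definition rhsv :: "(real^'n \<Rightarrow> real^'m) \<Rightarrow> real^'m \<Rightarrow> real^'n" where
  "rhsv A w = (\<chi> i. A (axis i 1) \<bullet> w)"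
definition solc :: "(real^'n \<Rightarrow> real^'m) \<Rightarrow> real^'m \<Rightarrow> real^'n" where
  "solc A w = (\<chi> k. det (\<chi> i j. if j = k then rhsv A w $ i else gram A $ i $ j) / det (gram A))"

lemma gram_mult:
  assumes "linear A"
  shows "(gram A *v c) $ i = A (axis i 1) \<bullet> A c"
proof -
  have "A (axis i 1) \<bullet> A c = A (axis i 1) \<bullet> (\<Sum>j\<in>UNIV. (c$j) *\<^sub>R A (axis j 1))"
    using lin_expand[OF assms, of c] by simp
  also have "\<dots> = (\<Sum>j\<in>UNIV. (A (axis i 1) \<bullet> A (axis j 1)) * c $ j)"
    by (simp add: inner_sum_right mult.commute)
  finally show ?thesis by (simp add: matrix_vector_mult_def gram_def)
qed

lemma inner_zero_all:
  fixes A :: "real^'n \<Rightarrow> real^'m"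
  assumes "linear A" "\<And>i. A (axis i 1) \<bullet> u = 0"
  shows "A v \<bullet> u = 0"
proof -
  have "A v \<bullet> u = (\<Sum>i\<in>UNIV. (v$i) *\<^sub>R A (axis i 1)) \<bullet> u"
    using lin_expand[OF assms(1), of v] by simp
  also have "\<dots> = 0" using assms(2) by (simp add: inner_sum_left)
  finally show ?thesis .
qed

lemma gram_det:
  fixes A :: "real^'n \<Rightarrow> real^'m"
  assumes "linear A" "inj A"
  shows "det (gram A) \<noteq> 0"
proof -
  have "inj (\<lambda>c. gram A *v c)"
  proof (rule injI)
    fix c d assume "gram A *v c = gram A *v d"
    then have "\<And>i. A (axis i 1) \<bullet> A c = A (axis i 1) \<bullet> A d"
      using gram_mult[OF assms(1)] by metis
    then have "\<And>i. A (axis i 1) \<bullet> A (c - d) = 0"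
      using assms(1) by (simp add: linear_diff inner_diff_right)
    then have "A (c - d) \<bullet> A (c - d) = 0" using inner_zero_all[OF assms(1)] by blast
    then have "A (c - d) = A 0" using assms(1) by (simp add: linear_0)
    then show "c = d" using assms(2) by (simp add: inj_eq)
  qed
  then show ?thesis
    using det_nz_iff_inj[of "\<lambda>c. gram A *v c"] by simp
qed

lemma solc_eq:
  fixes A :: "real^'n \<Rightarrow> real^'m"
  assumes "linear A" "inj A"
  shows "A z \<bullet> A (solc A w) = A z \<bullet> w"
proof -
  have g: "gram A *v solc A w = rhsv A w"
    unfolding solc_def by (rule iffD2[OF cramer[OF gram_det[OF assms]]]) (rule refl)
  have "A (axis i 1) \<bullet> (A (solc A w) - w) = 0" for i
  proof -
    have "A (axis i 1) \<bullet> A (solc A w) = (gram A *v solc A w) $ i"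
      using gram_mult[OF assms(1)] by metis
    also have "\<dots> = A (axis i 1) \<bullet> w" unfolding g rhsv_def by simp
    finally show ?thesis by (simp add: inner_diff_right)
  qed
  then have "A z \<bullet> (A (solc A w) - w) = 0" using inner_zero_all[OF assms(1)] by blast
  then show ?thesis by (simp add: inner_diff_right)
qed

lemma proj_char:
  fixes A :: "real^'n \<Rightarrow> real^'m"
  assumes "linear A" "inj A"
  shows "(THE u. (\<forall>v. u \<bullet> A v = 0) \<and> w - u \<in> range A) = w - A (solc A w)"
proof (rule the_equality)
  have "(w - A (solc A w)) \<bullet> A v = 0" for v
  proof -
    have "(w - A (solc A w)) \<bullet> A v = A v \<bullet> w - A v \<bullet> A (solc A w)"
      by (simp add: inner_diff_left inner_commute[of "A (solc A w)" "A v"] inner_commute[of w "A v"])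
    then show ?thesis using solc_eq[OF assms, of v w] by simp
  qed
  then show "(\<forall>v. (w - A (solc A w)) \<bullet> A v = 0) \<and> w - (w - A (solc A w)) \<in> range A"
    by simp
next
  fix u assume u: "(\<forall>v. u \<bullet> A v = 0) \<and> w - u \<in> range A"
  then obtain c where c: "w - u = A c" by blast
  define e where "e = solc A w - c"
  have ue: "u - (w - A (solc A w)) = A e"
    using c assms(1) unfolding e_def by (simp add: linear_diff algebra_simps)
  have "(u - (w - A (solc A w))) \<bullet> A v = 0" for v
  proof -
    have "(u - (w - A (solc A w))) \<bullet> A v = u \<bullet> A v - (A v \<bullet> w - A v \<bullet> A (solc A w))"
      by (simp add: inner_diff_left inner_commute[of "A (solc A w)" "A v"] inner_commute[of w "A v"])
    then show ?thesis using u solc_eq[OF assms, of v w] by simp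
  qed
  then have "A e \<bullet> A e = 0" using ue by metis
  then have "A e = 0" by simp
  then show "u = w - A (solc A w)" using ue by simp
qed

lemma det_differentiable:
  fixes M :: "real \<Rightarrow> real^'n^'n"
  assumes "\<And>i j. (\<lambda>t. M t $ i $ j) differentiable (at t0)"
  shows "(\<lambda>t. det (M t)) differentiable (at t0)"
proof -
  have pr: "(\<lambda>t. \<Prod>i\<in>UNIV. M t $ i $ p i) differentiable (at t0)" for p :: "'n \<Rightarrow> 'n"
  proof -
    have "\<forall>i. \<exists>D. ((\<lambda>t. M t $ i $ p i) has_derivative D) (at t0)"
      using assms unfolding differentiable_def by blast
    then have "\<exists>D. \<forall>i. ((\<lambda>t. M t $ i $ p i) has_derivative D i) (at t0)"
      by (rule choice)
    then obtain D where "\<And>i. ((\<lambda>t. M t $ i $ p i) has_derivative D i) (at t0)"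
      by blast
    then have "((\<lambda>t. \<Prod>i\<in>UNIV. M t $ i $ p i) has_derivative
       (\<lambda>y. \<Sum>i\<in>UNIV. D i y * (\<Prod>j\<in>UNIV - {i}. M t0 $ j $ p j))) (at t0)"
      using has_derivative_prod[of UNIV "\<lambda>i t. M t $ i $ p i" D t0 UNIV] by blast
    then show ?thesis unfolding differentiable_def by blast
  qed
  have "(\<lambda>t. \<Sum>p\<in>{p. p permutes UNIV}. of_int (sign p) * (\<Prod>i\<in>UNIV. M t $ i $ p i)) differentiable (at t0)"
    by (rule differentiable_sum) (simp, intro ballI differentiable_mult differentiable_const pr)
  then show ?thesis unfolding det_def .
qed

lemma frechet_cong:
  assumes "open S" "x \<in> S" "\<And>y. y \<in> S \<Longrightarrow> g y = h y" "(g has_derivative g') (at x)"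
  shows "frechet_derivative h (at x) = g'"
proof -
  have "(h has_derivative g') (at x)"
    using has_derivative_transform_within_open[OF assms(4,1,2)] assms(3) by blast
  then show ?thesis using frechet_derivative_at by metis
qed

lemma partial_y:
  assumes "(G has_derivative G') (at (t, y))"
  shows "((\<lambda>y. G (t, y)) has_derivative (\<lambda>v. G' (0, v))) (at y)"
proof -
  have "((\<lambda>y. (t, y)) has_derivative (\<lambda>v. (0, v))) (at y)"
    by (intro has_derivative_Pair has_derivative_const has_derivative_ident)
  from has_derivative_compose[OF this, of G G'] assms show ?thesis by simp
qed

lemma partial_t:
  assumes "(G has_derivative G') (at (t, y))"
  shows "((\<lambda>t. G (t, y)) has_vector_derivative G' (1, 0)) (at t)"
proof -
  have "((\<lambda>t. (t, y)) has_derivative (\<lambda>s. (s, 0))) (at t)"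
    by (intro has_derivative_Pair has_derivative_const has_derivative_ident)
  from has_derivative_compose[OF this, of G G'] assms
  have d: "((\<lambda>t. G (t, y)) has_derivative (\<lambda>s. G' (s, 0))) (at t)" by simp
  have lin: "linear G'" using assms has_derivative_linear by blast
  have "(\<lambda>s. G' (s, 0)) = (\<lambda>s. s *\<^sub>R G' (1, 0))"
  proof
    fix s :: real
    have "G' (s, 0) = G' (s *\<^sub>R (1, 0))" by simp
    also have "\<dots> = s *\<^sub>R G' (1, 0)" by (rule linear_scale[OF lin])
    finally show "G' (s, 0) = s *\<^sub>R G' (1, 0)" .
  qed
  then show ?thesis using d unfolding has_vector_derivative_def by simp
qed

lemma hvd_cmul:
  "(g has_vector_derivative g') F \<Longrightarrow> ((\<lambda>x. c *\<^sub>R g x) has_vector_derivative c *\<^sub>R g') F"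
  unfolding has_vector_derivative_def
  by (drule bounded_linear.has_derivative[OF bounded_linear_scaleR_right, of _ _ _ c]) (simp add: mult.commute)

lemma hvd_inner_diff:
  "(f has_vector_derivative f') (at t) \<Longrightarrow> (g has_vector_derivative g') (at t) \<Longrightarrow>
   (\<lambda>t. f t \<bullet> g t) differentiable (at t)"
  unfolding has_vector_derivative_def differentiable_def by (blast intro: has_derivative_inner)

lemma linear_pair0: "linear (\<lambda>v. (0::real, v))"
  by (rule linearI) auto

lemma deriv_apply:
  fixes L :: "real^'n \<Rightarrow> real^'k \<Rightarrow> 'c::real_normed_vector" and g :: "real^'n \<Rightarrow> real^'k"
  assumes U: "open U" "x \<in> U" and lin: "\<And>y. y \<in> U \<Longrightarrow> linear (L y)"
    and M: "\<And>i. ((\<lambda>y. L y (axis i 1)) has_derivative M i) (at x)"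
    and g: "(g has_derivative g') (at x)"
  shows "((\<lambda>y. L y (g y)) has_derivative (\<lambda>w. L x (g' w) + (\<Sum>i\<in>UNIV. (g x $ i) *\<^sub>R M i w))) (at x)"
proof -
  have gi: "((\<lambda>y. g y $ i) has_derivative (\<lambda>w. g' w $ i)) (at x)" for i
    by (rule bounded_linear.has_derivative[OF bounded_linear_vec_nth g])
  have d: "((\<lambda>y. \<Sum>i\<in>UNIV. (g y $ i) *\<^sub>R L y (axis i 1)) has_derivative
      (\<lambda>w. \<Sum>i\<in>UNIV. (g x $ i) *\<^sub>R M i w + (g' w $ i) *\<^sub>R L x (axis i 1))) (at x)"
    by (rule has_derivative_sum, rule has_derivative_scaleR[OF gi M])
  have eq: "(\<lambda>w. \<Sum>i\<in>UNIV. (g x $ i) *\<^sub>R M i w + (g' w $ i) *\<^sub>R L x (axis i 1))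
      = (\<lambda>w. L x (g' w) + (\<Sum>i\<in>UNIV. (g x $ i) *\<^sub>R M i w))"
  proof (rule ext)
    fix w
    have "(\<Sum>i\<in>UNIV. (g x $ i) *\<^sub>R M i w + (g' w $ i) *\<^sub>R L x (axis i 1))
        = (\<Sum>i\<in>UNIV. (g x $ i) *\<^sub>R M i w) + (\<Sum>i\<in>UNIV. (g' w $ i) *\<^sub>R L x (axis i 1))"
      by (rule sum.distrib)
    also have "(\<Sum>i\<in>UNIV. (g' w $ i) *\<^sub>R L x (axis i 1)) = L x (g' w)"
      by (rule lin_expand[OF lin[OF U(2)], symmetric])
    finally show "(\<Sum>i\<in>UNIV. (g x $ i) *\<^sub>R M i w + (g' w $ i) *\<^sub>R L x (axis i 1))
        = L x (g' w) + (\<Sum>i\<in>UNIV. (g x $ i) *\<^sub>R M i w)" by (simp add: add.commute)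
  qed
  show ?thesis
  proof (rule has_derivative_transform_within_open[OF d[unfolded eq] U])
    fix y assume y: "y \<in> U"
    show "(\<Sum>i\<in>UNIV. (g y $ i) *\<^sub>R L y (axis i 1)) = L y (g y)"
      by (rule lin_expand[OF lin[OF y], symmetric])
  qed
qed

theorem mainTheorem3:
  fixes F :: "real \<times> (real^'n) \<Rightarrow> real^'m"
    and \<gamma> :: "real \<times> (real^'n) \<Rightarrow> real"
    and U :: "(real^'n) set" and \<epsilon> :: real
  assumes "open U" and "\<epsilon> > 0"
    and F_smooth: "smooth_on ({-\<epsilon><..<\<epsilon>} \<times> U) F"
    and immersion: "\<And>t x. t \<in> {-\<epsilon><..<\<epsilon>} \<Longrightarrow> x \<in> U \<Longrightarrow> inj (dF F t x)"
    and \<gamma>_smooth: "smooth_on ({-\<epsilon><..<\<epsilon>} \<times> U) \<gamma>"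
    and \<gamma>_pos: "\<And>t x. t \<in> {-\<epsilon><..<\<epsilon>} \<Longrightarrow> x \<in> U \<Longrightarrow> \<gamma> (t, x) > 0"
    and \<gamma>_0: "\<And>x. x \<in> U \<Longrightarrow> \<gamma> (0, x) = 1"
    and conformal: "\<And>X Y x. smooth_on U X \<Longrightarrow> smooth_on U Y \<Longrightarrow> x \<in> U \<Longrightarrow>
        ((\<lambda>t. \<gamma> (t, x) * (dF F t x (X x) \<bullet> dF F t x (Y x))) has_real_derivative 0) (at 0)"
    and X: "smooth_on U X" and Y: "smooth_on U Y"
    and \<eta>: "smooth_on U \<eta>" and \<eta>_normal: "\<And>x v. x \<in> U \<Longrightarrow> \<eta> x \<bullet> dF F 0 x v = 0"
    and "x \<in> U"
  shows "\<exists>D. ((\<lambda>t. sff F t X Y x) has_vector_derivative D) (at 0) \<and>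
             D \<bullet> \<eta> x = (betaT F \<gamma> X Y x + cfactor \<gamma> x *\<^sub>R sff F 0 X Y x) \<bullet> \<eta> x"
proof -
  note U = \<open>open U\<close> and xU = \<open>x \<in> U\<close>
  define I where "I = {-\<epsilon><..<\<epsilon>}"
  have oI: "open I" and I0: "0 \<in> I" using \<open>\<epsilon> > 0\<close> by (auto simp: I_def)
  define S where "S = I \<times> U"
  have oS: "open S" unfolding S_def using oI U by (rule open_Times)
  have inS: "\<And>t y. t \<in> I \<Longrightarrow> y \<in> U \<Longrightarrow> (t, y) \<in> S" by (simp add: S_def)
  have sF: "smooth_on S F" using F_smooth by (simp add: S_def I_def)
  define DF where "DF q = frechet_derivative F (at q)" for q
  define D2 where "D2 u q = frechet_derivative (\<lambda>q. DF q u) (at q)" for u q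
  define D3 where "D3 u v q = frechet_derivative (\<lambda>q. D2 u q v) (at q)" for u v q
  have s1: "smooth_on S (\<lambda>q. DF q u)" for u
    unfolding DF_def by (rule smooth_deriv_smooth[OF oS sF])
  have s2: "smooth_on S (\<lambda>q. D2 u q v)" for u v
    unfolding D2_def by (rule smooth_deriv_smooth[OF oS s1])
  have hd1: "\<And>q. q \<in> S \<Longrightarrow> (F has_derivative DF q) (at q)"
    unfolding DF_def by (rule smooth_deriv[OF oS sF])
  have hd2: "\<And>q u. q \<in> S \<Longrightarrow> ((\<lambda>q. DF q u) has_derivative D2 u q) (at q)"
    unfolding D2_def by (rule smooth_deriv[OF oS s1])
  have hd3: "\<And>q u v. q \<in> S \<Longrightarrow> ((\<lambda>q. D2 u q v) has_derivative D3 u v q) (at q)"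
    unfolding D3_def by (rule smooth_deriv[OF oS s2])
  have lin1: "\<And>q. q \<in> S \<Longrightarrow> linear (DF q)" using hd1 has_derivative_linear by blast
  have lin2: "\<And>q u. q \<in> S \<Longrightarrow> linear (D2 u q)" using hd2 has_derivative_linear by blast
  have sym2: "\<And>q u v. q \<in> S \<Longrightarrow> D2 u q v = D2 v q u"
    unfolding D2_def DF_def by (rule schwarz_smooth[OF oS sF])
  have sym3a: "\<And>q u v w. q \<in> S \<Longrightarrow> D3 u v q w = D3 u w q v"
    unfolding D3_def D2_def by (rule schwarz_smooth[OF oS s1])
  have sym3b: "\<And>q u v w. q \<in> S \<Longrightarrow> D3 u v q w = D3 v u q w"
  proof -
    fix q u v w assume q: "q \<in> S"
    have "frechet_derivative (\<lambda>q. D2 v q u) (at q) = D3 u v q"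
      by (rule frechet_cong[OF oS q _ hd3[OF q]]) (simp add: sym2)
    then show "D3 u v q w = D3 v u q w" unfolding D3_def[of v u] by simp
  qed
  have x0S: "(0, x) \<in> S" using inS[OF I0 xU] .
  have dF_eq: "\<And>t y. t \<in> I \<Longrightarrow> y \<in> U \<Longrightarrow> dF F t y = (\<lambda>v. DF (t, y) (0, v))"
    unfolding dF_def using partial_y[OF hd1] frechet_derivative_at inS by metis
  define A where "A t = (\<lambda>v. DF (t, x) (0, v))" for t
  have linA: "\<And>t. t \<in> I \<Longrightarrow> linear (A t)"
    unfolding A_def using linear_compose[OF linear_pair0 lin1] inS[OF _ xU] by (simp add: o_def)
  have injA: "\<And>t. t \<in> I \<Longrightarrow> inj (A t)"
    using immersion dF_eq xU unfolding A_def I_def by metis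
  have AdF: "\<And>t. t \<in> I \<Longrightarrow> dF F t x = A t" using dF_eq xU unfolding A_def by blast

  define X0 where "X0 = X x"
  define Y0 where "Y0 = Y x"
  define DYX where "DYX = frechet_derivative Y (at x) X0"
  have Yd: "(Y has_derivative frechet_derivative Y (at x)) (at x)" by (rule smooth_deriv[OF U Y xU])
  define w where "w t = Dir (\<lambda>y. dF F t y (Y y)) X x" for t
  have w_eq: "\<And>t. t \<in> I \<Longrightarrow> w t = DF (t, x) (0, DYX) + (\<Sum>i\<in>UNIV. (Y0 $ i) *\<^sub>R D2 (0, axis i 1) (t, x) (0, X0))"
  proof -
    fix t assume t: "t \<in> I"
    have hd: "((\<lambda>y. DF (t, y) (0, Y y)) has_derivative
        (\<lambda>v. DF (t, x) (0, frechet_derivative Y (at x) v) + (\<Sum>i\<in>UNIV. (Y x $ i) *\<^sub>R D2 (0, axis i 1) (t, x) (0, v)))) (at x)"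
    proof (rule deriv_apply[OF U xU _ _ Yd, where L="\<lambda>y v. DF (t, y) (0, v)"])
      fix y assume "y \<in> U"
      then show "linear (\<lambda>v. DF (t, y) (0, v))"
        using linear_compose[OF linear_pair0 lin1[OF inS[OF t]]] by (simp add: o_def)
    next
      fix i show "((\<lambda>y. DF (t, y) (0, axis i 1)) has_derivative (\<lambda>v. D2 (0, axis i 1) (t, x) (0, v))) (at x)"
        by (rule partial_y[OF hd2[OF inS[OF t xU]]])
    qed
    have "frechet_derivative (\<lambda>y. dF F t y (Y y)) (at x) =
        (\<lambda>v. DF (t, x) (0, frechet_derivative Y (at x) v) + (\<Sum>i\<in>UNIV. (Y x $ i) *\<^sub>R D2 (0, axis i 1) (t, x) (0, v)))"
      by (rule frechet_cong[OF U xU _ hd]) (simp add: dF_eq[OF t])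
    then show "w t = DF (t, x) (0, DYX) + (\<Sum>i\<in>UNIV. (Y0 $ i) *\<^sub>R D2 (0, axis i 1) (t, x) (0, X0))"
      unfolding w_def Dir_def DYX_def X0_def Y0_def by simp
  qed
  define W' where "W' = D2 (0, DYX) (0, x) (1, 0) + (\<Sum>i\<in>UNIV. (Y0 $ i) *\<^sub>R D3 (0, axis i 1) (0, X0) (0, x) (1, 0))"
  have wd: "(w has_vector_derivative W') (at 0)"
  proof -
    have "((\<lambda>t. DF (t, x) (0, DYX) + (\<Sum>i\<in>UNIV. (Y0 $ i) *\<^sub>R D2 (0, axis i 1) (t, x) (0, X0))) has_vector_derivative W') (at 0)"
      unfolding W'_def
      by (intro has_vector_derivative_add has_vector_derivative_sum hvd_cmul
            partial_t[OF hd2[OF x0S]] partial_t[OF hd3[OF x0S]])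
    then show ?thesis
      by (rule has_vector_derivative_transform_within_open[OF _ oI I0]) (simp add: w_eq)
  qed
  define T where "T = bending F"
  have Td: "\<And>y. y \<in> U \<Longrightarrow> (T has_derivative (\<lambda>v. D2 (1, 0) (0, y) (0, v))) (at y)"
  proof -
    fix y assume y: "y \<in> U"
    have "T = (\<lambda>y. DF (0, y) (1, 0))" unfolding T_def bending_def DF_def by (rule ext) simp
    then show "(T has_derivative (\<lambda>v. D2 (1, 0) (0, y) (0, v))) (at y)"
      using partial_y[OF hd2[OF inS[OF I0 y]]] by simp
  qed
  have DirT: "\<And>Z y. y \<in> U \<Longrightarrow> Dir T Z y = D2 (1, 0) (0, y) (0, Z y)"
    unfolding Dir_def using Td frechet_derivative_at by metis
  have DDT: "Dir (Dir T Y) X x = D2 (1, 0) (0, x) (0, DYX) + (\<Sum>i\<in>UNIV. (Y0 $ i) *\<^sub>R D3 (1, 0) (0, axis i 1) (0, x) (0, X0))"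
  proof -
    have hd: "((\<lambda>y. D2 (1, 0) (0, y) (0, Y y)) has_derivative
        (\<lambda>v. D2 (1, 0) (0, x) (0, frechet_derivative Y (at x) v) + (\<Sum>i\<in>UNIV. (Y x $ i) *\<^sub>R D3 (1, 0) (0, axis i 1) (0, x) (0, v)))) (at x)"
    proof (rule deriv_apply[OF U xU _ _ Yd, where L="\<lambda>y v. D2 (1, 0) (0, y) (0, v)"])
      fix y assume "y \<in> U"
      then show "linear (\<lambda>v. D2 (1, 0) (0, y) (0, v))"
        using linear_compose[OF linear_pair0 lin2[OF inS[OF I0]]] by (simp add: o_def)
    next
      fix i show "((\<lambda>y. D2 (1, 0) (0, y) (0, axis i 1)) has_derivative (\<lambda>v. D3 (1, 0) (0, axis i 1) (0, x) (0, v))) (at x)"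
        by (rule partial_y[OF hd3[OF x0S]])
    qed
    have "frechet_derivative (Dir T Y) (at x) =
        (\<lambda>v. D2 (1, 0) (0, x) (0, frechet_derivative Y (at x) v) + (\<Sum>i\<in>UNIV. (Y x $ i) *\<^sub>R D3 (1, 0) (0, axis i 1) (0, x) (0, v)))"
      by (rule frechet_cong[OF U xU _ hd]) (simp add: DirT)
    then show ?thesis unfolding Dir_def[of "Dir T Y"] DYX_def X0_def Y0_def by simp
  qed
  have DDT_eq: "Dir (Dir T Y) X x = W'"
  proof -
    have "D3 (1, 0) (0, axis i 1) (0, x) (0, X0) = D3 (0, axis i 1) (0, X0) (0, x) (1, 0)" for i
      using sym3a[OF x0S] sym3b[OF x0S] by metis
    then show ?thesis unfolding DDT W'_def using sym2[OF x0S] by simp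
  qed

  define e where "e i = (axis i 1 :: real^'n)" for i
  define cc where "cc t = solc (A t) (w t)" for t
  have sff_eq: "\<And>t. t \<in> I \<Longrightarrow> sff F t X Y x = w t - (\<Sum>i\<in>UNIV. (cc t $ i) *\<^sub>R DF (t, x) (0, e i))"
  proof -
    fix t assume t: "t \<in> I"
    have "sff F t X Y x = w t - A t (cc t)"
      unfolding sff_def nproj_def AdF[OF t] w_def[symmetric] cc_def
      by (rule proj_char[OF linA[OF t] injA[OF t]])
    also have "A t (cc t) = (\<Sum>i\<in>UNIV. (cc t $ i) *\<^sub>R A t (axis i 1))"
      by (rule lin_expand[OF linA[OF t]])
    also have "\<dots> = (\<Sum>i\<in>UNIV. (cc t $ i) *\<^sub>R DF (t, x) (0, e i))"
      unfolding A_def e_def by simp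
    finally show "sff F t X Y x = w t - (\<Sum>i\<in>UNIV. (cc t $ i) *\<^sub>R DF (t, x) (0, e i))" .
  qed
  have Ad: "\<And>v. ((\<lambda>t. A t v) has_vector_derivative D2 (0, v) (0, x) (1, 0)) (at 0)"
    unfolding A_def by (rule partial_t[OF hd2[OF x0S]])
  have gramd: "(\<lambda>t. gram (A t) $ i $ j) differentiable (at 0)" for i j
    unfolding gram_def by (simp, rule hvd_inner_diff[OF Ad Ad])
  have rhsd: "(\<lambda>t. rhsv (A t) (w t) $ i) differentiable (at 0)" for i
    unfolding rhsv_def by (simp, rule hvd_inner_diff[OF Ad wd])
  have det0: "det (gram (A 0)) \<noteq> 0" by (rule gram_det[OF linA[OF I0] injA[OF I0]])
  have ccd: "(\<lambda>t. cc t $ k) differentiable (at 0)" for k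
  proof -
    have "(\<lambda>t. det (\<chi> i j. if j = k then rhsv (A t) (w t) $ i else gram (A t) $ i $ j)) differentiable (at 0)"
    proof (rule det_differentiable)
      fix i j
      show "(\<lambda>t. (\<chi> i j. if j = k then rhsv (A t) (w t) $ i else gram (A t) $ i $ j) $ i $ j) differentiable (at 0)"
        using rhsd gramd by (cases "j = k") simp_all
    qed
    moreover have "(\<lambda>t. det (gram (A t))) differentiable (at 0)"
      by (rule det_differentiable[OF gramd])
    ultimately have "(\<lambda>t. det (\<chi> i j. if j = k then rhsv (A t) (w t) $ i else gram (A t) $ i $ j) / det (gram (A t))) differentiable (at 0)"
      using det0 by (rule differentiable_divide)
    then show ?thesis unfolding cc_def solc_def by simp
  qed
  define c' where "c' k = deriv (\<lambda>t. cc t $ k) 0" for k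
  have c'd: "\<And>k. ((\<lambda>t. cc t $ k) has_field_derivative c' k) (at 0)"
    unfolding c'_def using ccd DERIV_deriv_iff_real_differentiable by blast
  define D where "D = W' - (\<Sum>i\<in>UNIV. (cc 0 $ i) *\<^sub>R D2 (0, e i) (0, x) (1, 0) + c' i *\<^sub>R DF (0, x) (0, e i))"
  have Nd: "((\<lambda>t. w t - (\<Sum>i\<in>UNIV. (cc t $ i) *\<^sub>R DF (t, x) (0, e i))) has_vector_derivative D) (at 0)"
    unfolding D_def
    by (intro has_vector_derivative_diff[OF wd] has_vector_derivative_sum has_vector_derivative_scaleR[OF c'd]
        partial_t[OF hd2[OF x0S]])
  have sffd: "((\<lambda>t. sff F t X Y x) has_vector_derivative D) (at 0)"
    by (rule has_vector_derivative_transform_within_open[OF Nd oI I0]) (simp add: sff_eq)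

  define B where "B a b = D2 (0, a) (0, x) (0, b)" for a b
  have nA: "\<And>v. A 0 v \<bullet> \<eta> x = 0"
    using \<eta>_normal[OF xU] AdF[OF I0] by (simp add: inner_commute)
  have linB2: "linear (\<lambda>b. B a b)" for a
    unfolding B_def using linear_compose[OF linear_pair0 lin2[OF x0S]] by (simp add: o_def)
  have lin12: "linear (\<lambda>v. D2 (1, 0) (0, x) (0, v))"
    using linear_compose[OF linear_pair0 lin2[OF x0S]] by (simp add: o_def)
  have Bsym: "\<And>a b. B a b = B b a" unfolding B_def using sym2[OF x0S] by blast
  have gm: "\<And>u z. gmet F x u z = A 0 u \<bullet> A 0 z" unfolding gmet_def using AdF[OF I0] by simp
  have gm_d: "\<And>a b. frechet_derivative (\<lambda>y. gmet F y a b) (at x) = (\<lambda>v. A 0 a \<bullet> B b v + B a v \<bullet> A 0 b)"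
  proof -
    fix a b
    have hd: "((\<lambda>y. DF (0, y) (0, a) \<bullet> DF (0, y) (0, b)) has_derivative
       (\<lambda>v. DF (0, x) (0, a) \<bullet> D2 (0, b) (0, x) (0, v) + D2 (0, a) (0, x) (0, v) \<bullet> DF (0, x) (0, b))) (at x)"
      by (rule has_derivative_inner[OF partial_y[OF hd2[OF x0S]] partial_y[OF hd2[OF x0S]]])
    have "frechet_derivative (\<lambda>y. gmet F y a b) (at x) =
       (\<lambda>v. DF (0, x) (0, a) \<bullet> D2 (0, b) (0, x) (0, v) + D2 (0, a) (0, x) (0, v) \<bullet> DF (0, x) (0, b))"
      by (rule frechet_cong[OF U xU _ hd]) (simp add: gmet_def dF_eq[OF I0])
    then show "frechet_derivative (\<lambda>y. gmet F y a b) (at x) = (\<lambda>v. A 0 a \<bullet> B b v + B a v \<bullet> A 0 b)"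
      unfolding A_def B_def by simp
  qed
  have w0: "w 0 = A 0 DYX + B X0 Y0"
  proof -
    have "(\<Sum>i\<in>UNIV. (Y0 $ i) *\<^sub>R B (axis i 1) X0) = (\<Sum>i\<in>UNIV. (Y0 $ i) *\<^sub>R B X0 (axis i 1))"
      using Bsym by simp
    also have "\<dots> = B X0 Y0" by (rule lin_expand[OF linB2, symmetric])
    finally show ?thesis using w_eq[OF I0] unfolding A_def B_def by simp
  qed
  define c0 where "c0 = cc 0 - DYX"
  have c0eq: "\<And>z. A 0 c0 \<bullet> A 0 z = B X0 Y0 \<bullet> A 0 z"
  proof -
    fix z
    have "A 0 z \<bullet> A 0 (cc 0) = A 0 z \<bullet> w 0"
      unfolding cc_def by (rule solc_eq[OF linA[OF I0] injA[OF I0]])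
    then have h1: "A 0 (cc 0) \<bullet> A 0 z = A 0 DYX \<bullet> A 0 z + B X0 Y0 \<bullet> A 0 z"
      by (simp add: w0 inner_add_right inner_commute[of "A 0 z"])
    have "A 0 c0 = A 0 (cc 0) - A 0 DYX" unfolding c0_def by (rule linear_diff[OF linA[OF I0]])
    then show "A 0 c0 \<bullet> A 0 z = B X0 Y0 \<bullet> A 0 z"
      using h1 by (simp add: inner_diff_left)
  qed
  have chr: "christoffel F x X0 Y0 = c0"
    unfolding christoffel_def
  proof (rule the_equality)
    show "\<forall>z. gmet F x c0 z = 1 / 2 * (frechet_derivative (\<lambda>y. gmet F y Y0 z) (at x) X0 +
        frechet_derivative (\<lambda>y. gmet F y X0 z) (at x) Y0 - frechet_derivative (\<lambda>y. gmet F y X0 Y0) (at x) z)"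
    proof
      fix z
      have e1: "B Y0 X0 = B X0 Y0" "B z X0 = B X0 z" "B z Y0 = B Y0 z" using Bsym by auto
      have e2: "A 0 Y0 \<bullet> B X0 z = B X0 z \<bullet> A 0 Y0" "A 0 X0 \<bullet> B Y0 z = B Y0 z \<bullet> A 0 X0"
        "A 0 z \<bullet> B X0 Y0 = B X0 Y0 \<bullet> A 0 z" by (simp_all add: inner_commute)
      show "gmet F x c0 z = 1 / 2 * (frechet_derivative (\<lambda>y. gmet F y Y0 z) (at x) X0 +
        frechet_derivative (\<lambda>y. gmet F y X0 z) (at x) Y0 - frechet_derivative (\<lambda>y. gmet F y X0 Y0) (at x) z)"
        unfolding gm gm_d c0eq e1 e2 by simp
    qed
  next
    fix u assume u: "\<forall>z. gmet F x u z = 1 / 2 * (frechet_derivative (\<lambda>y. gmet F y Y0 z) (at x) X0 +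
        frechet_derivative (\<lambda>y. gmet F y X0 z) (at x) Y0 - frechet_derivative (\<lambda>y. gmet F y X0 Y0) (at x) z)"
    have "A 0 u \<bullet> A 0 z = A 0 c0 \<bullet> A 0 z" for z
    proof -
      have e1: "B Y0 X0 = B X0 Y0" "B z X0 = B X0 z" "B z Y0 = B Y0 z" using Bsym by auto
      have e2: "A 0 Y0 \<bullet> B X0 z = B X0 z \<bullet> A 0 Y0" "A 0 X0 \<bullet> B Y0 z = B Y0 z \<bullet> A 0 X0"
        "A 0 z \<bullet> B X0 Y0 = B X0 Y0 \<bullet> A 0 z" by (simp_all add: inner_commute)
      show ?thesis using u[rule_format, of z] unfolding gm gm_d c0eq e1 e2 by simp
    qed
    then have "A 0 (u - c0) \<bullet> A 0 z = 0" for z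
      by (simp add: linear_diff[OF linA[OF I0]] inner_diff_left)
    then have "A 0 (u - c0) = 0" using inner_eq_zero_iff by blast
    then have "A 0 (u - c0) = A 0 0" using linear_0[OF linA[OF I0]] by simp
    then show "u = c0" using injA[OF I0] by (simp add: inj_eq)
  qed
  have LCx: "LC F X Y x = cc 0"
    unfolding LC_def Dir_def chr[unfolded X0_def Y0_def] using c0_def DYX_def X0_def by simp

  define V where "V = Dir (Dir T Y) X x - Dir T (LC F X Y) x"
  have rhs1: "betaT F \<gamma> X Y x + cfactor \<gamma> x *\<^sub>R sff F 0 X Y x = nproj F 0 x V"
    unfolding betaT_def V_def T_def by simp
  have rhs2: "nproj F 0 x V = V - A 0 (solc (A 0) V)"
    unfolding nproj_def AdF[OF I0] by (rule proj_char[OF linA[OF I0] injA[OF I0]])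
  have V_eq: "V = W' - (\<Sum>i\<in>UNIV. (cc 0 $ i) *\<^sub>R D2 (0, e i) (0, x) (1, 0))"
  proof -
    have "Dir T (LC F X Y) x = D2 (1, 0) (0, x) (0, cc 0)"
      using DirT[OF xU, of "LC F X Y"] LCx by simp
    also have "\<dots> = (\<Sum>i\<in>UNIV. (cc 0 $ i) *\<^sub>R D2 (1, 0) (0, x) (0, axis i 1))"
      by (rule lin_expand[OF lin12])
    also have "\<dots> = (\<Sum>i\<in>UNIV. (cc 0 $ i) *\<^sub>R D2 (0, e i) (0, x) (1, 0))"
      unfolding e_def using sym2[OF x0S] by simp
    finally show ?thesis unfolding V_def DDT_eq by simp
  qed
  have Deta: "D \<bullet> \<eta> x = W' \<bullet> \<eta> x - (\<Sum>i\<in>UNIV. (cc 0 $ i) *\<^sub>R D2 (0, e i) (0, x) (1, 0)) \<bullet> \<eta> x"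
  proof -
    have "DF (0, x) (0, e i) \<bullet> \<eta> x = 0" for i using nA[of "e i"] unfolding A_def .
    then show ?thesis
      unfolding D_def by (simp add: inner_diff_left inner_sum_left inner_add_left)
  qed
  have "(betaT F \<gamma> X Y x + cfactor \<gamma> x *\<^sub>R sff F 0 X Y x) \<bullet> \<eta> x = V \<bullet> \<eta> x"
    unfolding rhs1 rhs2 using nA by (simp add: inner_diff_left)
  then have "D \<bullet> \<eta> x = (betaT F \<gamma> X Y x + cfactor \<gamma> x *\<^sub>R sff F 0 X Y x) \<bullet> \<eta> x"
    using Deta V_eq by (simp add: inner_diff_left)
  then show ?thesis using sffd by blast

qed

end
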